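(* For $K=2$ users and $Q\ge1$ layers, with $\Pr[M\ge q]>0$ and $\mathbb{E}[N_u]>0$, the region $\mathcal{C}^{\rm in}$ equals the set of $(R_1,R_2)\in\mathbb{R}_+^2$ for which there exist $R_{u,q}\ge0$ with $R_u=\sum_{q=1}^QR_{u,q}$ such that $$\max_{q}\frac{R_{1,q}+R_{2,q}}{\Pr[M\ge q]}\le1\quad\text{and}\quad \frac{1}{\mathbb{E}[N_u]}\sum_{q=1}^Q\Big(R_{u,q}+R_{\bar u,q}\frac{\Pr[N_u\ge q]}{\Pr[M\ge q]}\Big)\le1\ \text{ for }(u,\bar u)\in\{(1,2),(2,1)\};$$ that is, $\mathcal{C}^{\rm in}$ has the same form as $\mathcal{S}^{\rm in}$ with arrival rates replaced by message rates (and strict inequalities replaced by non-strict ones).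
   Context: Channel: two-user LPE-BC with $Q$ layers; the state $(N_1,N_2)\in\{0,\dots,Q\}^2$ has an arbitrary joint law, $M:=\max(N_1,N_2)$, $[x]^+=\max(0,x)$. For nonnegative reals $k_{u,q}$ define $t^{\rm unc}_q=\frac{k_{1,q}+k_{2,q}}{\Pr[M\ge q]}$, $t^{\rm unc}=\max_q t^{\rm unc}_q$, $k^{\rm rem}_{u,q}=k_{u,q}(1-\frac{\Pr[N_u\ge q]}{\Pr[M\ge q]})$, $k^{\rm rem}_u=\big[\sum_{q=1}^Q(k^{\rm rem}_{u,q}-(t^{\rm unc}-t^{\rm unc}_q)\Pr[N_u\ge q])\big]^+$, $t^{\rm NC}=\max_u k^{\rm rem}_u/\mathbb{E}[N_u]$, and $\mathcal{C}^{\rm in}=\bigcup_{t>0,k_{u,q}\ge0}\{(R_1,R_2): t^{\rm unc}+t^{\rm NC}\le t,\ R_u=\frac1t\sum_q k_{u,q}\}$. $\mathcal{S}^{\rm in}$ is the set of $(\lambda_1,\lambda_2)\in\mathbb{R}^2_+$ for which there exist $\lambda_{u,q}\ge0$ with $\lambda_u=\sum_q\lambda_{u,q}$, $\frac{\lambda_{1,q}+\lambda_{2,q}}{\Pr[M\ge q]}<1$ for all $q$, and $\sum_q(\lambda_{u,q}+\lambda_{\bar u,q}\frac{\Pr[N_u\ge q]}{\Pr[M\ge q]})<\mathbb{E}[N_u]$ for $(u,\bar u)\in\{(1,2),(2,1)\}$. *)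

theory Defs
  imports "HOL-Probability.Probability"
begin

text \<open>Channel state (N_1, N_2) with joint law P :: (nat \<times> nat) pmf, supported on
  {0..Q} \<times> {0..Q}. Users are indexed by u \<in> {1,2}, layers by q \<in> {1..Q}.\<close>

definition Nst :: "nat \<Rightarrow> nat \<times> nat \<Rightarrow> nat" where
  "Nst u s = (if u = 1 then fst s else snd s)"

definition PrM :: "(nat \<times> nat) pmf \<Rightarrow> nat \<Rightarrow> real" where
  "PrM P q = measure_pmf.prob P {s. max (fst s) (snd s) \<ge> q}"

definition PrN :: "(nat \<times> nat) pmf \<Rightarrow> nat \<Rightarrow> nat \<Rightarrow> real" where
  "PrN P u q = measure_pmf.prob P {s. Nst u s \<ge> q}"

definition EN :: "(nat \<times> nat) pmf \<Rightarrow> nat \<Rightarrow> real" where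
  "EN P u = measure_pmf.expectation P (\<lambda>s. real (Nst u s))"

definition t_unc_q :: "(nat \<times> nat) pmf \<Rightarrow> (nat \<Rightarrow> nat \<Rightarrow> real) \<Rightarrow> nat \<Rightarrow> real" where
  "t_unc_q P k q = (k 1 q + k 2 q) / PrM P q"

definition t_unc :: "(nat \<times> nat) pmf \<Rightarrow> nat \<Rightarrow> (nat \<Rightarrow> nat \<Rightarrow> real) \<Rightarrow> real" where
  "t_unc P Q k = Max ((\<lambda>q. t_unc_q P k q) ` {1..Q})"

definition k_rem_q :: "(nat \<times> nat) pmf \<Rightarrow> (nat \<Rightarrow> nat \<Rightarrow> real) \<Rightarrow> nat \<Rightarrow> nat \<Rightarrow> real" where
  "k_rem_q P k u q = k u q * (1 - PrN P u q / PrM P q)"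

definition k_rem :: "(nat \<times> nat) pmf \<Rightarrow> nat \<Rightarrow> (nat \<Rightarrow> nat \<Rightarrow> real) \<Rightarrow> nat \<Rightarrow> real" where
  "k_rem P Q k u = max 0 (\<Sum>q=1..Q. k_rem_q P k u q - (t_unc P Q k - t_unc_q P k q) * PrN P u q)"

definition t_NC :: "(nat \<times> nat) pmf \<Rightarrow> nat \<Rightarrow> (nat \<Rightarrow> nat \<Rightarrow> real) \<Rightarrow> real" where
  "t_NC P Q k = max (k_rem P Q k 1 / EN P 1) (k_rem P Q k 2 / EN P 2)"

definition C_in :: "(nat \<times> nat) pmf \<Rightarrow> nat \<Rightarrow> (real \<times> real) set" where
  "C_in P Q = (\<Union>t\<in>{t. t > 0}. \<Union>k\<in>{k. \<forall>u\<in>{1,2}. \<forall>q\<in>{1..Q}. k u q \<ge> 0}.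
      {(R1, R2). t_unc P Q k + t_NC P Q k \<le> t \<and>
                 R1 = (1 / t) * (\<Sum>q=1..Q. k 1 q) \<and> R2 = (1 / t) * (\<Sum>q=1..Q. k 2 q)})"

end

theory Submission imports Defs begin

lemma sum_ind: "n \<le> Q \<Longrightarrow> (\<Sum>q=1..Q. (if q \<le> n then 1 else 0)::real) = real n"
proof -
  assume "n \<le> Q"
  have "(\<Sum>q=1..Q. (if q \<le> n then 1 else 0)::real) = (\<Sum>q\<in>{1..Q} \<inter> {q. q \<le> n}. 1)"
    by (simp only: sum.If_cases[OF finite_atLeastAtMost]) simp
  also have "{1..Q} \<inter> {q. q \<le> n} = {1..n}" using \<open>n \<le> Q\<close> by auto
  finally show ?thesis by simp
qed

lemma ind_int: "integrable (measure_pmf (P::(nat\<times>nat) pmf)) (indicator A :: _ \<Rightarrow> real)"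
  by (rule integrable_real_indicator) (auto simp: measure_pmf.emeasure_finite less_top[symmetric])

lemma EN_sum:
  assumes "set_pmf P \<subseteq> {0..Q} \<times> {0..Q}"
  shows "EN P u = (\<Sum>q=1..Q. PrN P u q)"
proof -
  have "AE s in measure_pmf P. real (Nst u s) = (\<Sum>q\<in>{1..Q}. indicator {s. q \<le> Nst u s} s :: real)"
  proof (rule AE_pmfI)
    fix s assume "s \<in> set_pmf P"
    then have "Nst u s \<le> Q" using assms by (auto simp: Nst_def)
    then show "real (Nst u s) = (\<Sum>q\<in>{1..Q}. indicator {s. q \<le> Nst u s} s :: real)"
    proof -
      have "(\<Sum>q\<in>{1..Q}. indicator {s. q \<le> Nst u s} s :: real) = (\<Sum>q=1..Q. (if q \<le> Nst u s then 1 else 0)::real)"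
        by (intro sum.cong) (auto simp: indicator_def)
      then show ?thesis using sum_ind[OF \<open>Nst u s \<le> Q\<close>] by simp
    qed
  qed
  then have "EN P u = measure_pmf.expectation P (\<lambda>s. \<Sum>q\<in>{1..Q}. indicator {s. q \<le> Nst u s} s :: real)"
    unfolding EN_def by (intro integral_cong_AE) auto
  also have "\<dots> = (\<Sum>q=1..Q. PrN P u q)"
  proof -
    have "measure_pmf.expectation P (\<lambda>s. \<Sum>q\<in>{1..Q}. indicator {s. q \<le> Nst u s} s :: real)
       = (\<Sum>q\<in>{1..Q}. measure_pmf.expectation P (indicator {s. q \<le> Nst u s} :: _ \<Rightarrow> real))"
      by (rule Bochner_Integration.integral_sum) (rule ind_int)
    then show ?thesis by (simp add: PrN_def)
  qed
  finally show ?thesis .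
qed

lemma key:
  assumes pos: "\<forall>q\<in>{1..Q}. PrM P q > 0"
    and u: "u \<in> {1,2::nat}" and ub: "ub = (if u = 1 then 2 else 1)"
    and EN: "EN P u = (\<Sum>q=1..Q. PrN P u q)"
  shows "(\<Sum>q=1..Q. k_rem_q P k u q - (t_unc P Q k - t_unc_q P k q) * PrN P u q)
       = (\<Sum>q=1..Q. k u q + k ub q * (PrN P u q / PrM P q)) - t_unc P Q k * EN P u"
proof -
  have "\<And>q. q \<in> {1..Q} \<Longrightarrow> k_rem_q P k u q - (t_unc P Q k - t_unc_q P k q) * PrN P u q
      = (k u q + k ub q * (PrN P u q / PrM P q)) - t_unc P Q k * PrN P u q"
  proof -
    fix q assume "q \<in> {1..Q}"
    then have "PrM P q \<noteq> 0" using pos by force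
    then show "k_rem_q P k u q - (t_unc P Q k - t_unc_q P k q) * PrN P u q
      = (k u q + k ub q * (PrN P u q / PrM P q)) - t_unc P Q k * PrN P u q"
      using u ub by (auto simp: k_rem_q_def t_unc_q_def field_simps)
  qed
  then have "(\<Sum>q=1..Q. k_rem_q P k u q - (t_unc P Q k - t_unc_q P k q) * PrN P u q)
     = (\<Sum>q=1..Q. (k u q + k ub q * (PrN P u q / PrM P q)) - t_unc P Q k * PrN P u q)"
    by (rule sum.cong[OF refl])
  also have "\<dots> = (\<Sum>q=1..Q. k u q + k ub q * (PrN P u q / PrM P q)) - t_unc P Q k * EN P u"
    by (simp add: sum_subtractf sum_distrib_left EN)
  finally show ?thesis .
qed

theorem lemma3:
  fixes P :: "(nat \<times> nat) pmf" and Q :: nat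
  assumes "Q \<ge> 1"
    and "set_pmf P \<subseteq> {0..Q} \<times> {0..Q}"
    and "\<forall>q\<in>{1..Q}. PrM P q > 0"
    and "\<forall>u\<in>{1,2}. EN P u > 0"
  shows "C_in P Q =
    {(R1, R2). R1 \<ge> 0 \<and> R2 \<ge> 0 \<and>
      (\<exists>R :: nat \<Rightarrow> nat \<Rightarrow> real.
         (\<forall>u\<in>{1,2}. \<forall>q\<in>{1..Q}. R u q \<ge> 0) \<and>
         R1 = (\<Sum>q=1..Q. R 1 q) \<and> R2 = (\<Sum>q=1..Q. R 2 q) \<and>
         Max ((\<lambda>q. (R 1 q + R 2 q) / PrM P q) ` {1..Q}) \<le> 1 \<and>
         (\<forall>(u, ub)\<in>{(1::nat, 2::nat), (2, 1)}.
            (1 / EN P u) * (\<Sum>q=1..Q. R u q + R ub q * (PrN P u q / PrM P q)) \<le> 1))}"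
    (is "_ = ?S")
proof
  have fin: "finite {1..Q}" "{1..Q} \<noteq> {}" using assms(1) by auto
  have pos: "\<And>q. q \<in> {1..Q} \<Longrightarrow> PrM P q > 0" using assms(3) by auto
  have E1: "EN P 1 > 0" and E2: "EN P 2 > 0" using assms(4) by auto
  have ENs: "\<And>u. EN P u = (\<Sum>q=1..Q. PrN P u q)" using EN_sum[OF assms(2)] .
  show "C_in P Q \<subseteq> ?S"
  proof
    fix x assume "x \<in> C_in P Q"
    then obtain t k R1 R2 where t: "t > 0" and k: "\<forall>u\<in>{1,2}. \<forall>q\<in>{1..Q}. k u q \<ge> 0"
      and x: "x = (R1, R2)" and tt: "t_unc P Q k + t_NC P Q k \<le> t"
      and R1: "R1 = (1 / t) * (\<Sum>q=1..Q. k 1 q)" and R2: "R2 = (1 / t) * (\<Sum>q=1..Q. k 2 q)"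
      unfolding C_in_def by blast
    define R where "R = (\<lambda>u q. k u q / t)"
    have kr: "k_rem P Q k u \<ge> 0" for u unfolding k_rem_def by simp
    have NC1: "k_rem P Q k 1 \<le> t_NC P Q k * EN P 1"
    proof -
      have "k_rem P Q k 1 / EN P 1 \<le> t_NC P Q k" unfolding t_NC_def by simp
      then have "k_rem P Q k 1 / EN P 1 * EN P 1 \<le> t_NC P Q k * EN P 1"
        using E1 by (intro mult_right_mono) auto
      then show ?thesis using E1 by simp
    qed
    have NC2: "k_rem P Q k 2 \<le> t_NC P Q k * EN P 2"
    proof -
      have "k_rem P Q k 2 / EN P 2 \<le> t_NC P Q k" unfolding t_NC_def by simp
      then have "k_rem P Q k 2 / EN P 2 * EN P 2 \<le> t_NC P Q k * EN P 2"
        using E2 by (intro mult_right_mono) auto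
      then show ?thesis using E2 by simp
    qed
    have NC0: "t_NC P Q k \<ge> 0"
      using E1 E2 kr unfolding t_NC_def by (simp add: le_max_iff_disj)
    have tu: "t_unc P Q k \<le> t" using tt NC0 by linarith
    have tq: "t_unc_q P k q \<le> t_unc P Q k" if "q \<in> {1..Q}" for q
      unfolding t_unc_def using fin that by (intro Max_ge) auto
    have bound: "(\<Sum>q=1..Q. k u q + k ub q * (PrN P u q / PrM P q)) \<le> t * EN P u"
      if u: "u \<in> {1,2::nat}" and ub: "ub = (if u = 1 then 2 else 1)" for u ub
    proof -
      have NC: "k_rem P Q k u \<le> t_NC P Q k * EN P u" using u NC1 NC2 by auto
      have Ep: "EN P u > 0" using u E1 E2 by auto
      have "(\<Sum>q=1..Q. k u q + k ub q * (PrN P u q / PrM P q))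
          = (\<Sum>q=1..Q. k_rem_q P k u q - (t_unc P Q k - t_unc_q P k q) * PrN P u q) + t_unc P Q k * EN P u"
        using key[OF assms(3) u ub ENs[of u], of k] by simp
      also have "\<dots> \<le> k_rem P Q k u + t_unc P Q k * EN P u"
        unfolding k_rem_def by simp
      also have "\<dots> \<le> (t_NC P Q k + t_unc P Q k) * EN P u" using NC by (simp add: algebra_simps)
      also have "\<dots> \<le> t * EN P u" using tt Ep by (intro mult_right_mono) auto
      finally show ?thesis .
    qed
    have "R1 \<ge> 0" "R2 \<ge> 0" using R1 R2 t k by (auto intro!: sum_nonneg divide_nonneg_pos)
    moreover have "\<forall>u\<in>{1,2}. \<forall>q\<in>{1..Q}. R u q \<ge> 0" using k t by (auto simp: R_def)
    moreover have "R1 = (\<Sum>q=1..Q. R 1 q)" "R2 = (\<Sum>q=1..Q. R 2 q)"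
      using R1 R2 by (auto simp: R_def sum_divide_distrib)
    moreover have "Max ((\<lambda>q. (R 1 q + R 2 q) / PrM P q) ` {1..Q}) \<le> 1"
    proof (subst Max_le_iff)
      show "\<forall>a\<in>(\<lambda>q. (R 1 q + R 2 q) / PrM P q) ` {1..Q}. a \<le> 1"
      proof
        fix a assume "a \<in> (\<lambda>q. (R 1 q + R 2 q) / PrM P q) ` {1..Q}"
        then obtain q where q: "q \<in> {1..Q}" and a: "a = (R 1 q + R 2 q) / PrM P q" by auto
        have "a = t_unc_q P k q / t" using a t pos[OF q] unfolding R_def t_unc_q_def by (simp add: field_simps)
        also have "\<dots> \<le> 1" using tq[OF q] tu t by simp
        finally show "a \<le> 1" .
      qed
    qed (use fin in auto)
    moreover have "\<forall>(u, ub)\<in>{(1::nat, 2::nat), (2, 1)}.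
            (1 / EN P u) * (\<Sum>q=1..Q. R u q + R ub q * (PrN P u q / PrM P q)) \<le> 1"
    proof -
      have "(1 / EN P u) * (\<Sum>q=1..Q. R u q + R ub q * (PrN P u q / PrM P q)) \<le> 1"
        if u: "u \<in> {1,2::nat}" and ub: "ub = (if u = 1 then 2 else 1)" for u ub
      proof -
        have Ep: "EN P u > 0" using u E1 E2 by auto
        have "(\<Sum>q=1..Q. R u q + R ub q * (PrN P u q / PrM P q))
            = (\<Sum>q=1..Q. k u q + k ub q * (PrN P u q / PrM P q)) / t"
          unfolding R_def sum_divide_distrib using t pos by (intro sum.cong) (auto simp: field_simps)
        also have "\<dots> \<le> EN P u" using bound[OF u ub] t by (simp add: divide_le_eq mult.commute)
        finally show ?thesis using Ep by (simp add: divide_le_eq)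
      qed
      from this[of 1 2] this[of 2 1] show ?thesis by simp
    qed
    ultimately show "x \<in> ?S" unfolding x by blast
  qed
  show "?S \<subseteq> C_in P Q"
  proof
    fix x assume "x \<in> ?S"
    then obtain R1 R2 R where x: "x = (R1, R2)"
      and Rn: "\<forall>u\<in>{1,2}. \<forall>q\<in>{1..Q}. R u q \<ge> (0::real)"
      and R1: "R1 = (\<Sum>q=1..Q. R 1 q)" and R2: "R2 = (\<Sum>q=1..Q. R 2 q)"
      and mx: "Max ((\<lambda>q. (R 1 q + R 2 q) / PrM P q) ` {1..Q}) \<le> 1"
      and cs: "\<forall>(u, ub)\<in>{(1::nat, 2::nat), (2, 1)}.
            (1 / EN P u) * (\<Sum>q=1..Q. R u q + R ub q * (PrN P u q / PrM P q)) \<le> 1"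
      by blast
    have tu: "t_unc P Q R \<le> 1" using mx unfolding t_unc_def t_unc_q_def .
    have kb: "k_rem P Q R u / EN P u \<le> 1 - t_unc P Q R"
      if u: "u \<in> {1,2::nat}" and ub: "ub = (if u = 1 then 2 else 1)" for u ub :: nat
    proof -
      have Ep: "EN P u > 0" using u E1 E2 by auto
      have c: "(\<Sum>q=1..Q. R u q + R ub q * (PrN P u q / PrM P q)) \<le> EN P u"
        using cs u ub Ep by (auto simp: divide_le_eq)
      have "EN P u * t_unc P Q R \<le> EN P u" using tu Ep by (simp add: mult_left_le)
      then have "k_rem P Q R u \<le> (1 - t_unc P Q R) * EN P u"
        unfolding k_rem_def key[OF assms(3) u ub ENs[of u], of R]
        using c tu Ep by (intro max.boundedI) (simp_all add: left_diff_distrib)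
      then show ?thesis using Ep by (simp add: divide_le_eq)
    qed
    have "t_NC P Q R \<le> 1 - t_unc P Q R"
      unfolding t_NC_def by (rule max.boundedI[OF kb[of 1 2] kb[of 2 1]]) auto
    then have tt: "t_unc P Q R + t_NC P Q R \<le> 1" by linarith
    show "x \<in> C_in P Q" unfolding C_in_def x
      apply (rule UN_I[where a=1])
       apply simp
      apply (rule UN_I[where a=R])
      using Rn apply simp
      using tt R1 R2 by simp
  qed
qed

end
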